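(* Let $K$ be a real closed field, $C$ a multiplicative cut in $K$, and let $L$ be the real closure of the ordered field $K(x)$, where $x$ realizes the cut $C$. Then for any $y\in L$ realizing the same cut $C$ of $K$, we have $x^{1/n}<y<x^n$ for some positive integer $n$.
   Context: A cut of a real closed field $K$ is a pair $C=(C^-,C^+)$ with $K=C^-\cup C^+$ disjoint and $C^-<C^+$. $K_+=\{c\in K:c>0\}$. The cut $C$ is multiplicative if $C^-\cap K_+$ is closed under multiplication and contains $2$. If $K\subseteq L$ are ordered fields, an element $a\in L$ realizes the cut $C$ of $K$ if $C^-=\{c\in K:c<a\}$ and $C^+=\{c\in K:c>a\}$. $K(x)$ denotes the ordered field generated by $K$ and an element $x$ realizing $C$. *)

theory Defs
  imports "HOL-Computational_Algebra.Polynomial"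
begin

text \<open>All fields are subfields of an ambient ordered field of type 'a, with the induced order.\<close>

definition subfield :: "'a::field set \<Rightarrow> bool" where
  "subfield F \<longleftrightarrow> 0 \<in> F \<and> 1 \<in> F \<and>
     (\<forall>a\<in>F. \<forall>b\<in>F. a + b \<in> F \<and> a - b \<in> F \<and> a * b \<in> F) \<and>
     (\<forall>a\<in>F. inverse a \<in> F)"

definition real_closed_subfield :: "'a::linordered_field set \<Rightarrow> bool" where
  "real_closed_subfield F \<longleftrightarrow> subfield F \<and>
     (\<forall>a\<in>F. 0 \<le> a \<longrightarrow> (\<exists>b\<in>F. b * b = a)) \<and>
     (\<forall>p. (\<forall>i. coeff p i \<in> F) \<longrightarrow> odd (degree p) \<longrightarrow> (\<exists>r\<in>F. poly p r = 0))"

definition adjoin :: "'a::field set \<Rightarrow> 'a \<Rightarrow> 'a set" where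
  "adjoin F x = \<Inter>{E. subfield E \<and> F \<subseteq> E \<and> x \<in> E}"

definition algebraic_over :: "'a::field set \<Rightarrow> 'a \<Rightarrow> bool" where
  "algebraic_over F a \<longleftrightarrow> (\<exists>p. p \<noteq> 0 \<and> (\<forall>i. coeff p i \<in> F) \<and> poly p a = 0)"

definition real_closure_of :: "'a::linordered_field set \<Rightarrow> 'a set \<Rightarrow> bool" where
  "real_closure_of L F \<longleftrightarrow> real_closed_subfield L \<and> F \<subseteq> L \<and> (\<forall>a\<in>L. algebraic_over F a)"

definition is_cut :: "'a::linorder set \<Rightarrow> 'a set \<Rightarrow> 'a set \<Rightarrow> bool" where
  "is_cut K Cm Cp \<longleftrightarrow> K = Cm \<union> Cp \<and> Cm \<inter> Cp = {} \<and> (\<forall>a\<in>Cm. \<forall>b\<in>Cp. a < b)"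

definition multiplicative_cut :: "'a::linordered_field set \<Rightarrow> 'a set \<Rightarrow> 'a set \<Rightarrow> bool" where
  "multiplicative_cut K Cm Cp \<longleftrightarrow> is_cut K Cm Cp \<and>
     (\<forall>a\<in>Cm \<inter> {c. 0 < c}. \<forall>b\<in>Cm \<inter> {c. 0 < c}. a * b \<in> Cm \<inter> {c. 0 < c}) \<and> 2 \<in> Cm"

definition realizes_cut :: "'a::linorder set \<Rightarrow> 'a set \<Rightarrow> 'a set \<Rightarrow> 'a \<Rightarrow> bool" where
  "realizes_cut K Cm Cp a \<longleftrightarrow> Cm = {c\<in>K. c < a} \<and> Cp = {c\<in>K. a < c}"

end

theory Submission imports Defs begin

lemma sf_neg: "subfield F \<Longrightarrow> a \<in> F \<Longrightarrow> - a \<in> F"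
  unfolding subfield_def by (metis diff_0)
lemma sf_add: "subfield F \<Longrightarrow> a \<in> F \<Longrightarrow> b \<in> F \<Longrightarrow> a + b \<in> F"
  unfolding subfield_def by blast
lemma sf_diff: "subfield F \<Longrightarrow> a \<in> F \<Longrightarrow> b \<in> F \<Longrightarrow> a - b \<in> F"
  unfolding subfield_def by blast
lemma sf_mult: "subfield F \<Longrightarrow> a \<in> F \<Longrightarrow> b \<in> F \<Longrightarrow> a * b \<in> F"
  unfolding subfield_def by blast
lemma sf_inv: "subfield F \<Longrightarrow> a \<in> F \<Longrightarrow> inverse a \<in> F"
  unfolding subfield_def by blast
lemma sf_divide: "subfield F \<Longrightarrow> a \<in> F \<Longrightarrow> b \<in> F \<Longrightarrow> a / b \<in> F"
  by (simp add: divide_inverse sf_inv sf_mult)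
lemma sf_0: "subfield F \<Longrightarrow> 0 \<in> F" unfolding subfield_def by blast
lemma sf_1: "subfield F \<Longrightarrow> 1 \<in> F" unfolding subfield_def by blast
lemma sf_abs: "subfield F \<Longrightarrow> (a::'a::linordered_field) \<in> F \<Longrightarrow> \<bar>a\<bar> \<in> F"
  by (cases "a \<ge> 0") (auto simp: sf_neg)
lemma sf_sum: "finite A \<Longrightarrow> subfield F \<Longrightarrow> (\<forall>i\<in>A. f i \<in> F) \<Longrightarrow> sum f A \<in> F"
  by (induction A rule: finite_induct) (auto simp: sf_0 sf_add)

definition kp :: "'a::field set \<Rightarrow> 'a poly \<Rightarrow> bool" where
  "kp F p \<longleftrightarrow> (\<forall>i. coeff p i \<in> F)"

lemma kp_add: "subfield F \<Longrightarrow> kp F p \<Longrightarrow> kp F q \<Longrightarrow> kp F (p + q)"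
  unfolding kp_def by (simp add: sf_add)
lemma kp_diff: "subfield F \<Longrightarrow> kp F p \<Longrightarrow> kp F q \<Longrightarrow> kp F (p - q)"
  unfolding kp_def by (simp add: sf_diff)
lemma kp_mult: "subfield F \<Longrightarrow> kp F p \<Longrightarrow> kp F q \<Longrightarrow> kp F (p * q)"
  unfolding kp_def coeff_mult by (intro allI sf_sum[OF finite_atMost]) (auto simp: sf_mult)
lemma kp_const: "subfield F \<Longrightarrow> a \<in> F \<Longrightarrow> kp F [:a:]"
  unfolding kp_def by (auto simp: coeff_pCons sf_0 split: nat.split)
lemma kp_X: "subfield F \<Longrightarrow> kp F [:0, 1:]"
  unfolding kp_def by (auto simp: coeff_pCons sf_0 sf_1 split: nat.split)
lemma kp_1: "subfield F \<Longrightarrow> kp F 1"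
  unfolding kp_def by (auto simp: sf_0 sf_1)

lemma rc_root:
  fixes a :: "'a::linordered_field"
  assumes rc: "real_closed_subfield F"
  shows "a \<in> F \<Longrightarrow> 0 < a \<Longrightarrow> n > 0 \<Longrightarrow> \<exists>r\<in>F. 0 < r \<and> r ^ n = a"
proof (induction n arbitrary: a rule: less_induct)
  case (less n)
  have sf: "subfield F" using rc unfolding real_closed_subfield_def by blast
  show ?case
  proof (cases "even n")
    case True
    then obtain k where k: "n = 2 * k" by blast
    with less.prems have "k > 0" "k < n" by auto
    obtain b where b: "b \<in> F" "b * b = a"
      using rc less.prems unfolding real_closed_subfield_def by auto
    have "\<bar>b\<bar> \<in> F" using sf b by (simp add: sf_abs)
    moreover have "0 < \<bar>b\<bar>" using b less.prems by auto
    ultimately obtain r where r: "r \<in> F" "0 < r" "r ^ k = \<bar>b\<bar>"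
      using less.IH[OF \<open>k < n\<close>] \<open>k > 0\<close> by blast
    have "r ^ n = (r ^ k) ^ 2" using k by (simp add: power_mult[symmetric] mult.commute)
    also have "\<dots> = a" using b r by (simp add: power2_eq_square)
    finally show ?thesis using r by blast
  next
    case False
    define p where "p = [:- a:] + monom 1 n"
    have cf: "\<forall>i. coeff p i \<in> F"
      unfolding p_def using sf less.prems
      by (auto simp: coeff_pCons sf_0 sf_1 sf_neg split: nat.split)
    have "degree p = n" unfolding p_def
      using less.prems by (subst degree_add_eq_right) (auto simp: degree_monom_eq)
    then obtain r where r: "r \<in> F" "poly p r = 0"
      using rc cf False unfolding real_closed_subfield_def by blast
    hence rn: "r ^ n = a" unfolding p_def by (simp add: poly_monom)
    have "0 < r"
    proof (rule ccontr)
      assume "\<not> 0 < r"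
      hence "r ^ n \<le> 0" using False less.prems by (simp add: power_le_zero_eq)
      thus False using rn less.prems by simp
    qed
    thus ?thesis using r rn by blast
  qed
qed

definition infl :: "'a::linordered_field \<Rightarrow> bool" where
  "infl v \<longleftrightarrow> (\<forall>n::nat. of_nat n < v)"

lemma infl_gt1: "infl v \<Longrightarrow> 1 < v"
  unfolding infl_def by (metis of_nat_1)
lemma infl_mono: "infl a \<Longrightarrow> a \<le> b \<Longrightarrow> infl b"
  unfolding infl_def using order_less_le_trans by blast
lemma infl_pow:
  assumes "infl z" "0 < v" "z \<le> v ^ k" "k > 0"
  shows "infl v"
  unfolding infl_def
proof
  fix n :: nat
  show "of_nat n < v"
  proof (rule ccontr)
    assume "\<not> of_nat n < v"
    hence "v ^ k \<le> (of_nat n) ^ k" using assms(2) by (intro power_mono) auto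
    also have "\<dots> = of_nat (n ^ k)" by simp
    also have "\<dots> < z" using assms(1) unfolding infl_def by blast
    finally show False using assms(3) by simp
  qed
qed
lemma infl_scale:
  fixes v :: "'a::linordered_field"
  assumes "infl v" "0 < u" "1 / u < 9"
  shows "infl (u * v)"
  unfolding infl_def
proof
  fix n :: nat
  have u: "1/9 < u" using assms(2,3) by (simp add: field_simps)
  have v: "of_nat (9 * n) < v" using assms(1) unfolding infl_def by blast
  have "0 < v" using infl_gt1[OF assms(1)] by simp
  have "(of_nat n :: 'a) = (1/9) * of_nat (9*n)" by (simp add: field_simps)
  also have "\<dots> \<le> (1/9) * v" using v by simp
  also have "\<dots> < u * v" using u \<open>0 < v\<close> by (simp add: mult_strict_right_mono)
  finally show "of_nat n < u * v" .
qed

lemma dominance: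
  fixes t :: "'b \<Rightarrow> 'a::linordered_field"
  assumes fin: "finite I" and ne: "I \<noteq> {}" and nz: "\<forall>i\<in>I. t i \<noteq> 0"
    and cmp: "\<forall>i\<in>I. \<forall>j\<in>I. i \<noteq> j \<longrightarrow> infl \<bar>t i / t j\<bar> \<or> infl \<bar>t j / t i\<bar>"
  shows "\<exists>i0\<in>I. \<bar>sum t I - t i0\<bar> < \<bar>t i0\<bar> / 2"
proof -
  have "Max ((\<lambda>i. \<bar>t i\<bar>) ` I) \<in> (\<lambda>i. \<bar>t i\<bar>) ` I"
    by (rule Max_in) (use fin ne in auto)
  then obtain i0 where i0: "i0 \<in> I" "\<bar>t i0\<bar> = Max ((\<lambda>i. \<bar>t i\<bar>) ` I)"
    by auto
  have le: "\<bar>t j\<bar> \<le> \<bar>t i0\<bar>" if "j \<in> I" for j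
    using i0 that fin by simp
  define M where "M = \<bar>t i0\<bar> / (2 * of_nat (card I))"
  have cI: "card I > 0" using fin ne by (simp add: card_gt_0_iff)
  have ti0: "\<bar>t i0\<bar> > 0" using nz i0(1) by simp
  have small: "\<bar>t j\<bar> < M" if "j \<in> I - {i0}" for j
  proof -
    have j: "j \<in> I" "j \<noteq> i0" using that by auto
    have tj: "\<bar>t j\<bar> > 0" using nz j by simp
    have "\<not> infl \<bar>t j / t i0\<bar>"
    proof
      assume "infl \<bar>t j / t i0\<bar>"
      hence "1 < \<bar>t j\<bar> / \<bar>t i0\<bar>" using infl_gt1 by (simp add: abs_divide)
      thus False using le[OF j(1)] ti0 by (simp add: field_simps)
    qed
    hence "infl \<bar>t i0 / t j\<bar>" using cmp j i0 by blast
    hence "of_nat (2 * card I) < \<bar>t i0\<bar> / \<bar>t j\<bar>" unfolding infl_def abs_divide by blast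
    hence "of_nat (2 * card I) * \<bar>t j\<bar> < \<bar>t i0\<bar>" using tj by (simp add: field_simps)
    thus ?thesis unfolding M_def using cI by (simp add: field_simps)
  qed
  have eq: "sum t I = t i0 + sum t (I - {i0})"
    using fin i0 by (simp add: sum.remove)
  have "\<bar>sum t (I - {i0})\<bar> < \<bar>t i0\<bar> / 2"
  proof (cases "I - {i0} = {}")
    case True thus ?thesis using ti0 by (simp only: sum.empty abs_zero)
  next
    case False
    have "\<bar>sum t (I - {i0})\<bar> \<le> sum (\<lambda>j. \<bar>t j\<bar>) (I - {i0})" by (rule sum_abs)
    also have "\<dots> < sum (\<lambda>j. M) (I - {i0})"
      using fin False small by (intro sum_strict_mono) auto
    also have "\<dots> = of_nat (card (I - {i0})) * M" by simp
    also have "\<dots> \<le> of_nat (card I) * M"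
      using fin ti0 unfolding M_def by (intro mult_right_mono) (auto intro: card_mono)
    also have "\<dots> = \<bar>t i0\<bar> / 2" unfolding M_def using cI by (simp add: field_simps)
    finally show ?thesis .
  qed
  hence "\<bar>sum t I - t i0\<bar> < \<bar>t i0\<bar> / 2" using eq by simp
  thus ?thesis using i0(1) by blast
qed


lemma dominance_ne:
  fixes t :: "'b \<Rightarrow> 'a::linordered_field"
  assumes "finite I" and "I \<noteq> {}" and nz: "\<forall>i\<in>I. t i \<noteq> 0"
    and "\<forall>i\<in>I. \<forall>j\<in>I. i \<noteq> j \<longrightarrow> infl \<bar>t i / t j\<bar> \<or> infl \<bar>t j / t i\<bar>"
  shows "sum t I \<noteq> 0"
proof
  assume "sum t I = 0"
  then obtain i0 where "i0 \<in> I" "\<bar>t i0\<bar> < \<bar>t i0\<bar> / 2" using dominance[OF assms] by auto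
  thus False using nz by auto
qed

lemma aux_le4:
  fixes s z :: "'a::linordered_field"
  assumes "0 < s" "s ^ 4 \<le> z" "1 \<le> z" shows "s \<le> z"
proof (cases "s \<le> 1")
  case True thus ?thesis using assms by simp
next
  case False
  hence "s ^ 1 \<le> s ^ 4" by (intro power_increasing) auto
  thus ?thesis using assms by simp
qed

locale cutctx =
  fixes K Cm Cp :: "'a::linordered_field set"
  assumes rc: "real_closed_subfield K" and mc: "multiplicative_cut K Cm Cp"
begin

lemma sfK: "subfield K" using rc unfolding real_closed_subfield_def by blast

lemma cut_disj: "Cm \<inter> Cp = {}" and cut_un: "K = Cm \<union> Cp" and two: "2 \<in> Cm"
  using mc unfolding multiplicative_cut_def is_cut_def by auto

lemma Cm_mult: "a \<in> Cm \<Longrightarrow> b \<in> Cm \<Longrightarrow> 0 < a \<Longrightarrow> 0 < b \<Longrightarrow> a * b \<in> Cm"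
  using mc unfolding multiplicative_cut_def by auto

lemma pow_Cm: "c \<in> Cm \<Longrightarrow> 0 < c \<Longrightarrow> m > 0 \<Longrightarrow> c ^ m \<in> Cm"
proof (induction m)
  case 0 thus ?case by simp
next
  case (Suc m)
  show ?case
  proof (cases "m = 0")
    case True thus ?thesis using Suc by simp
  next
    case False
    hence "c ^ m \<in> Cm" using Suc by auto
    thus ?thesis using Cm_mult[of c "c^m"] Suc by simp
  qed
qed

lemma real_cut:
  assumes "realizes_cut K Cm Cp z"
  shows "c \<in> Cm \<Longrightarrow> c < z" and "c \<in> Cp \<Longrightarrow> z < c" and "c \<in> K \<Longrightarrow> c < z \<Longrightarrow> c \<in> Cm"
    and "c \<in> K \<Longrightarrow> z < c \<Longrightarrow> c \<in> Cp"
  using assms unfolding realizes_cut_def by auto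

lemma z_gt2: "realizes_cut K Cm Cp z \<Longrightarrow> 2 < z"
  using two real_cut by blast

lemma infl_z: assumes "realizes_cut K Cm Cp z" shows "infl z"
  unfolding infl_def
proof
  fix n :: nat
  show "of_nat n < z"
  proof (cases "n = 0")
    case True thus ?thesis using z_gt2[OF assms] by simp
  next
    case False
    have "(of_nat n :: 'a) < of_nat (2 ^ n)" by (simp only: of_nat_less_iff less_exp)
    also have "\<dots> = 2 ^ n" by simp
    also have "\<dots> < z" using pow_Cm[OF two] False real_cut(1)[OF assms] by simp
    finally show ?thesis .
  qed
qed

lemma Cp_pow:
  assumes z: "realizes_cut K Cm Cp z" and c: "c \<in> Cp" "0 < c"
  shows "z ^ m < c"
proof (cases "m = 0")
  case True thus ?thesis using z_gt2[OF z] real_cut(2)[OF z c(1)] by simp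
next
  case False
  have "c \<in> K" using c cut_un by blast
  then obtain r where r: "r \<in> K" "0 < r" "r ^ m = c"
    using rc_root[OF rc] c False by blast
  have "r \<notin> Cm"
  proof
    assume "r \<in> Cm"
    hence "c \<in> Cm" using pow_Cm r False by auto
    thus False using c cut_disj by blast
  qed
  hence "r \<in> Cp" using r cut_un by blast
  hence "z < r" using real_cut(2)[OF z] by blast
  hence "z ^ m < r ^ m" using False z_gt2[OF z] by (intro power_strict_mono) auto
  thus ?thesis using r by simp
qed

lemma tri:
  assumes z: "realizes_cut K Cm Cp z" and c: "c \<in> K" "0 < c"
  shows "(\<forall>m. z ^ m < c) \<or> (\<forall>m. z ^ m < 1 / c) \<or> (\<forall>m>0. c ^ m < z \<and> (1 / c) ^ m < z)"
proof (cases "c \<in> Cp")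
  case True thus ?thesis using Cp_pow[OF z] c by blast
next
  case False
  hence cm: "c \<in> Cm" using c cut_un by blast
  have ic: "1 / c \<in> K" "0 < 1 / c" using c sfK by (auto simp: sf_divide sf_1)
  show ?thesis
  proof (cases "1 / c \<in> Cp")
    case True thus ?thesis using Cp_pow[OF z True ic(2)] by blast
  next
    case False
    hence "1 / c \<in> Cm" using ic cut_un by blast
    thus ?thesis using cm pow_Cm c ic real_cut(1)[OF z] by blast
  qed
qed

lemma lemZ:
  assumes z: "realizes_cut K Cm Cp z" and c: "c \<in> K" "c \<noteq> 0"
    and w: "0 < w" "w ^ 4 \<le> z" "(1 / w) ^ 4 \<le> z" and d: "d > 0"
  shows "infl (\<bar>c\<bar> * z ^ d * w) \<or> infl (1 / (\<bar>c\<bar> * z ^ d * w))"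
proof -
  define a where "a = \<bar>c\<bar>"
  have a: "a \<in> K" "0 < a" using c sfK unfolding a_def by (auto simp: sf_abs)
  have z1: "1 \<le> z" "0 < z" using z_gt2[OF z] by auto
  have iz: "infl z" using infl_z[OF z] .
  have wz: "w \<le> z" using aux_le4[OF w(1,2) z1(1)] .
  have iwz: "1 / w \<le> z" using aux_le4[of "1/w" z] w z1 by simp
  have zw1: "1 \<le> z * w" using iwz w(1) by (simp add: field_simps)
  have zd: "z \<le> z ^ d" using z1 d power_increasing[of 1 d z] by simp
  have zdpos: "0 < z ^ d" using z1 by simp
  from tri[OF z a] show ?thesis
  proof (elim disjE)
    assume A: "\<forall>m. z ^ m < a"
    have "a * 1 \<le> a * (z * w)" using zw1 a by (intro mult_left_mono) auto
    also have "\<dots> \<le> a * (z ^ d * w)" using zd a w by (intro mult_left_mono mult_right_mono) auto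
    finally have "a \<le> a * z ^ d * w" by (simp add: mult.assoc)
    moreover have "z < a" using A[rule_format, of 1] by simp
    ultimately have "infl (a * z ^ d * w)" using iz infl_mono by (meson less_le_trans less_imp_le)
    thus ?thesis unfolding a_def by blast
  next
    assume B: "\<forall>m. z ^ m < 1 / a"
    have "z ^ d * w \<le> z ^ d * z" using wz zdpos by (intro mult_left_mono) auto
    hence le: "z ^ d * w \<le> z ^ Suc d" by (simp add: mult.commute)
    have "z = z ^ (d + 2) / z ^ Suc d" using z1 by (simp add: field_simps)
    also have "\<dots> < (1 / a) / z ^ Suc d" using B[rule_format, of "d+2"] z1 by (intro divide_strict_right_mono) auto
    also have "\<dots> \<le> (1 / a) / (z ^ d * w)" using le a w zdpos
      by (intro divide_left_mono) auto
    also have "\<dots> = 1 / (a * z ^ d * w)" by (simp add: field_simps)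
    finally have "infl (1 / (a * z ^ d * w))" using iz infl_mono less_imp_le by blast
    thus ?thesis unfolding a_def by blast
  next
    assume C: "\<forall>m>0. a ^ m < z \<and> (1 / a) ^ m < z"
    have a4: "1 / z < a ^ 4"
    proof -
      have "(1 / a) ^ 4 < z" using C by simp
      thus ?thesis using a z1 by (simp add: field_simps power_divide)
    qed
    have w4: "1 / z \<le> w ^ 4" using w z1 by (simp add: field_simps power_divide)
    have z4: "z ^ 4 \<le> (z ^ d) ^ 4" using zd z1 by (intro power_mono) auto
    have "(1 / z) * z ^ 4 * (1 / z) = z * z" using z1 by (simp add: field_simps power_eq_if)
    hence "z \<le> (1 / z) * z ^ 4 * (1 / z)" using z1 by simp
    also have "\<dots> < a ^ 4 * z ^ 4 * (1 / z)"
      using a4 z1 by (intro mult_strict_right_mono) auto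
    also have "\<dots> \<le> a ^ 4 * (z ^ d) ^ 4 * (1 / z)"
      using z4 z1 a by (intro mult_right_mono mult_left_mono) auto
    also have "\<dots> \<le> a ^ 4 * (z ^ d) ^ 4 * w ^ 4"
      using w4 z1 a by (intro mult_left_mono) auto
    also have "\<dots> = (a * z ^ d * w) ^ 4" by (simp add: power_mult_distrib)
    finally have "infl (a * z ^ d * w)"
      using infl_pow[OF iz, of "a * z ^ d * w" 4] a w zdpos by simp
    thus ?thesis unfolding a_def by blast
  qed
qed

end


lemma aux_div_le: "0 \<le> (A::'a::linordered_field) \<Longrightarrow> 1 \<le> B \<Longrightarrow> A / B \<le> A"
  by (simp add: divide_le_eq mult_le_cancel_left1)

context cutctx
begin

lemma keyL:
  assumes x: "realizes_cut K Cm Cp x" and y: "realizes_cut K Cm Cp y"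
    and H: "(\<forall>n. x ^ n \<le> y) \<or> (\<forall>n. y ^ n \<le> x)"
    and c: "c \<in> K" "c \<noteq> 0" and d: "d > 0"
  shows "infl (\<bar>c\<bar> * x ^ p / x ^ q * y ^ d) \<or> infl (1 / (\<bar>c\<bar> * x ^ p / x ^ q * y ^ d))"
proof -
  have x1: "1 \<le> x" "0 < x" using z_gt2[OF x] by auto
  have y1: "1 \<le> y" "0 < y" using z_gt2[OF y] by auto
  from H show ?thesis
  proof
    assume H2: "\<forall>n. x ^ n \<le> y"
    define w where "w = x ^ p / x ^ q"
    have w0: "0 < w" unfolding w_def using x1 by simp
    have "w ^ 4 = x ^ (p * 4) / x ^ (q * 4)" unfolding w_def by (simp add: power_divide power_mult)
    also have "\<dots> \<le> x ^ (p * 4)" using x1 by (intro aux_div_le) auto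
    also have "\<dots> \<le> y" using H2 by blast
    finally have w1: "w ^ 4 \<le> y" .
    have "(1 / w) ^ 4 = x ^ (q * 4) / x ^ (p * 4)" unfolding w_def by (simp add: power_divide power_mult)
    also have "\<dots> \<le> x ^ (q * 4)" using x1 by (intro aux_div_le) auto
    also have "\<dots> \<le> y" using H2 by blast
    finally have w2: "(1 / w) ^ 4 \<le> y" .
    have eq: "\<bar>c\<bar> * y ^ d * w = \<bar>c\<bar> * x ^ p / x ^ q * y ^ d" unfolding w_def by simp
    show ?thesis using lemZ[OF y c w0 w1 w2 d] unfolding eq .
  next
    assume H1: "\<forall>n. y ^ n \<le> x"
    consider "q < p" | "p < q" | "p = q" by linarith
    thus ?thesis
    proof cases
      case 1
      define w where "w = y ^ d"
      have w0: "0 < w" unfolding w_def using y1 by simp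
      have w1: "w ^ 4 \<le> x" unfolding w_def using H1 by (simp add: power_mult[symmetric])
      have "(1 / w) ^ 4 \<le> 1" unfolding w_def using y1 by (simp add: power_divide power_le_one one_le_power)
      hence w2: "(1 / w) ^ 4 \<le> x" using x1 by simp
      have dd: "p - q > 0" using 1 by simp
      have "x ^ p = x ^ (p - q) * x ^ q" using 1 by (simp add: power_add[symmetric])
      hence eq: "\<bar>c\<bar> * x ^ (p - q) * w = \<bar>c\<bar> * x ^ p / x ^ q * y ^ d"
        unfolding w_def using x1 by simp
      show ?thesis using lemZ[OF x c w0 w1 w2 dd] unfolding eq .
    next
      case 2
      define w where "w = 1 / y ^ d"
      have w0: "0 < w" unfolding w_def using y1 by simp
      have "w ^ 4 \<le> 1" unfolding w_def using y1 by (simp add: power_divide power_le_one one_le_power)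
      hence w1: "w ^ 4 \<le> x" using x1 by simp
      have w2: "(1 / w) ^ 4 \<le> x" unfolding w_def using H1 by (simp add: power_mult[symmetric])
      have dd: "q - p > 0" using 2 by simp
      have c': "1 / c \<in> K" "1 / c \<noteq> 0" using c sfK by (auto simp: sf_divide sf_1)
      have "x ^ q = x ^ (q - p) * x ^ p" using 2 by (simp add: power_add[symmetric])
      hence eq: "\<bar>1 / c\<bar> * x ^ (q - p) * w = 1 / (\<bar>c\<bar> * x ^ p / x ^ q * y ^ d)"
        unfolding w_def using x1 y1 by (simp add: abs_divide)
      have eq2: "1 / (\<bar>1 / c\<bar> * x ^ (q - p) * w) = \<bar>c\<bar> * x ^ p / x ^ q * y ^ d"
        unfolding eq by simp
      define V where "V = \<bar>c\<bar> * x ^ p / x ^ q * y ^ d"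
      have "1 / (1 / V) = V" by simp
      thus ?thesis using lemZ[OF x c' w0 w1 w2 dd] unfolding eq V_def[symmetric] by metis
    next
      case 3
      have w1: "(1::'a) ^ 4 \<le> y" "(1 / 1) ^ 4 \<le> y" using y1 by auto
      have eq: "\<bar>c\<bar> * y ^ d * 1 = \<bar>c\<bar> * x ^ p / x ^ q * y ^ d" using 3 x1 by simp
      show ?thesis using lemZ[OF y c _ w1 d] unfolding eq by simp
    qed
  qed
qed

lemma uni:
  assumes x: "realizes_cut K Cm Cp x" and f: "kp K f" "f \<noteq> 0"
  shows "\<exists>u a i. 1/2 < u \<and> u < 3/2 \<and> a \<in> K \<and> a \<noteq> 0 \<and> poly f x = u * (a * x ^ i)"
proof -
  have x1: "1 \<le> x" "0 < x" using z_gt2[OF x] by auto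
  define I where "I = {i. coeff f i \<noteq> 0}"
  define t where "t i = coeff f i * x ^ i" for i
  have IS: "I \<subseteq> {..degree f}" unfolding I_def using le_degree by auto
  have fin: "finite I" using IS finite_subset by blast
  have ne: "I \<noteq> {}" unfolding I_def using f(2) leading_coeff_0_iff by blast
  have nz: "\<forall>i\<in>I. t i \<noteq> 0" unfolding I_def t_def using x1 by auto
  have "sum t {..degree f} = sum t I"
    by (rule sum.mono_neutral_right[of "{..degree f}" I t]) (use IS in \<open>auto simp: I_def t_def\<close>)
  hence ps: "poly f x = sum t I" unfolding poly_altdef t_def by simp
  have cmp1: "infl \<bar>t i / t j\<bar> \<or> infl \<bar>t j / t i\<bar>" if "i \<in> I" "j \<in> I" "j < i" for i j
  proof -
    define c where "c = coeff f i / coeff f j"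
    have c: "c \<in> K" "c \<noteq> 0" unfolding c_def using f(1) that sfK unfolding kp_def I_def
      by (auto simp: sf_divide)
    have w: "(0::'a) < 1" "(1::'a) ^ 4 \<le> x" "(1 / 1) ^ 4 \<le> x" using x1 by auto
    have dd: "i - j > 0" using that by simp
    have "x ^ i = x ^ (i - j) * x ^ j" using that by (simp add: power_add[symmetric])
    hence eq: "\<bar>c\<bar> * x ^ (i - j) * 1 = \<bar>t i / t j\<bar>"
      unfolding c_def t_def using x1 that unfolding I_def by (simp add: abs_divide abs_mult)
    have eq2: "1 / \<bar>t i / t j\<bar> = \<bar>t j / t i\<bar>" by (simp add: abs_divide)
    show ?thesis using lemZ[OF x c w dd] unfolding eq eq2 .
  qed
  have cmp: "\<forall>i\<in>I. \<forall>j\<in>I. i \<noteq> j \<longrightarrow> infl \<bar>t i / t j\<bar> \<or> infl \<bar>t j / t i\<bar>"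
  proof (intro ballI impI)
    fix i j assume "i \<in> I" "j \<in> I" "i \<noteq> j"
    thus "infl \<bar>t i / t j\<bar> \<or> infl \<bar>t j / t i\<bar>"
      using cmp1[of i j] cmp1[of j i] by (cases "j < i") auto
  qed
  obtain i0 where i0: "i0 \<in> I" "\<bar>sum t I - t i0\<bar> < \<bar>t i0\<bar> / 2"
    using dominance[OF fin ne nz cmp] by blast
  define u where "u = sum t I / t i0"
  have ti0: "t i0 \<noteq> 0" using nz i0 by blast
  have "\<bar>u - 1\<bar> = \<bar>sum t I - t i0\<bar> / \<bar>t i0\<bar>" unfolding u_def using ti0
    by (simp add: field_simps flip: abs_divide)
  also have "\<dots> < 1/2" using i0 ti0 by (simp add: field_simps)
  finally have "\<bar>u - 1\<bar> < 1/2" .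
  hence "u - 1 < 1/2" "- (u - 1) < 1/2" by (simp_all only: abs_less_iff)
  hence u: "1/2 < u" "u < 3/2" by linarith+
  have "poly f x = u * (coeff f i0 * x ^ i0)" unfolding ps u_def using ti0 t_def by simp
  moreover have "coeff f i0 \<in> K" "coeff f i0 \<noteq> 0" using f(1) i0 unfolding kp_def I_def by auto
  ultimately show ?thesis using u by blast
qed

end


definition fr :: "'a::field set \<Rightarrow> 'a \<Rightarrow> 'a set" where
  "fr F x = {w. \<exists>f g. kp F f \<and> kp F g \<and> poly g x \<noteq> 0 \<and> w = poly f x / poly g x}"

lemma kp_0: "subfield F \<Longrightarrow> kp F 0"
  unfolding kp_def by (simp add: sf_0)

lemma fr_subfield: assumes sf: "subfield F" shows "subfield (fr F x)"
proof -
  have z: "0 \<in> fr F x" unfolding fr_def using kp_0[OF sf] kp_1[OF sf]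
    by (intro CollectI exI[of _ 0] exI[of _ 1]) simp
  have o: "1 \<in> fr F x" unfolding fr_def using kp_1[OF sf]
    by (intro CollectI exI[of _ 1] exI[of _ 1]) simp
  have ops: "a + b \<in> fr F x \<and> a - b \<in> fr F x \<and> a * b \<in> fr F x"
    if ab: "a \<in> fr F x" "b \<in> fr F x" for a b
  proof -
    obtain f1 g1 where 1: "kp F f1" "kp F g1" "poly g1 x \<noteq> 0" "a = poly f1 x / poly g1 x"
      using ab(1) unfolding fr_def by blast
    obtain f2 g2 where 2: "kp F f2" "kp F g2" "poly g2 x \<noteq> 0" "b = poly f2 x / poly g2 x"
      using ab(2) unfolding fr_def by blast
    have g: "kp F (g1 * g2)" "poly (g1 * g2) x \<noteq> 0" using 1 2 sf by (auto simp: kp_mult)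
    have "a + b = poly (f1 * g2 + f2 * g1) x / poly (g1 * g2) x"
      using 1(3) 2(3) unfolding 1(4) 2(4) by (simp add: field_simps)
    moreover have "kp F (f1 * g2 + f2 * g1)" using 1 2 sf by (simp add: kp_mult kp_add)
    ultimately have A: "a + b \<in> fr F x" unfolding fr_def using g by blast
    have "a - b = poly (f1 * g2 - f2 * g1) x / poly (g1 * g2) x"
      using 1(3) 2(3) unfolding 1(4) 2(4) by (simp add: field_simps)
    moreover have "kp F (f1 * g2 - f2 * g1)" using 1 2 sf by (simp add: kp_mult kp_diff)
    ultimately have B: "a - b \<in> fr F x" unfolding fr_def using g by blast
    have "a * b = poly (f1 * f2) x / poly (g1 * g2) x"
      using 1(3) 2(3) unfolding 1(4) 2(4) by (simp add: field_simps)
    moreover have "kp F (f1 * f2)" using 1 2 sf by (simp add: kp_mult)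
    ultimately have C: "a * b \<in> fr F x" unfolding fr_def using g by blast
    show ?thesis using A B C by blast
  qed
  have inv: "inverse a \<in> fr F x" if ha: "a \<in> fr F x" for a
  proof -
    obtain f1 g1 where 1: "kp F f1" "kp F g1" "poly g1 x \<noteq> 0" "a = poly f1 x / poly g1 x"
      using ha unfolding fr_def by blast
    show ?thesis
    proof (cases "poly f1 x = 0")
      case True thus ?thesis using 1 z by simp
    next
      case False
      have "inverse a = poly g1 x / poly f1 x" using 1 by simp
      thus ?thesis unfolding fr_def using 1 False by blast
    qed
  qed
  show ?thesis unfolding subfield_def using z o ops inv by blast
qed

lemma adjoin_fr: assumes sf: "subfield F" shows "adjoin F x \<subseteq> fr F x"
proof -
  have "F \<subseteq> fr F x"
  proof
    fix a assume "a \<in> F"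
    hence "kp F [:a:]" using kp_const sf by blast
    moreover have "a = poly [:a:] x / poly 1 x" by simp
    ultimately show "a \<in> fr F x" unfolding fr_def using kp_1[OF sf] by force
  qed
  moreover have "x \<in> fr F x"
  proof -
    have "x = poly [:0, 1:] x / poly 1 x" by simp
    thus ?thesis unfolding fr_def using kp_1[OF sf] kp_X[OF sf] by force
  qed
  ultimately show ?thesis unfolding adjoin_def using fr_subfield[OF sf] by (intro Inter_lower) blast
qed

lemma x_in_adjoin: "x \<in> adjoin F x"
  unfolding adjoin_def by blast

context cutctx
begin

lemma elem:
  assumes x: "realizes_cut K Cm Cp x" and w: "w \<in> adjoin K x" "w \<noteq> 0"
  shows "\<exists>u a p q. 1/3 < u \<and> u < 3 \<and> a \<in> K \<and> a \<noteq> 0 \<and> w = u * (a * x ^ p / x ^ q)"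
proof -
  obtain f g where fg: "kp K f" "kp K g" "poly g x \<noteq> 0" "w = poly f x / poly g x"
    using adjoin_fr[OF sfK] w(1) unfolding fr_def by blast
  have "f \<noteq> 0" using fg w(2) by auto
  then obtain u1 a1 i where 1: "1/2 < u1" "u1 < 3/2" "a1 \<in> K" "a1 \<noteq> 0" "poly f x = u1 * (a1 * x ^ i)"
    using uni[OF x fg(1)] by blast
  have "g \<noteq> 0" using fg by auto
  then obtain u2 a2 k where 2: "1/2 < u2" "u2 < 3/2" "a2 \<in> K" "a2 \<noteq> 0" "poly g x = u2 * (a2 * x ^ k)"
    using uni[OF x fg(2)] by blast
  have x0: "x \<noteq> 0" using z_gt2[OF x] by auto
  have "w = (u1 / u2) * ((a1 / a2) * x ^ i / x ^ k)" using fg(4) 1(5) 2(5) by simp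
  moreover have "1/3 < u1 / u2" using 1 2 by (simp add: field_simps)
  moreover have "u1 / u2 < 3" using 1 2 by (simp add: field_simps)
  moreover have "a1 / a2 \<in> K" "a1 / a2 \<noteq> 0" using 1 2 sfK by (auto simp: sf_divide)
  ultimately show ?thesis by blast
qed

end


context cutctx
begin

lemma main_loc:
  assumes x: "realizes_cut K Cm Cp x" and y: "realizes_cut K Cm Cp y"
    and L: "real_closure_of L (adjoin K x)" and yL: "y \<in> L"
    and H: "(\<forall>n. x ^ n \<le> y) \<or> (\<forall>n. y ^ n \<le> x)"
  shows False
proof -
  have x1: "1 \<le> x" "0 < x" using z_gt2[OF x] by auto
  have y1: "1 \<le> y" "0 < y" using z_gt2[OF y] by auto
  obtain p where p: "p \<noteq> 0" "\<forall>i. coeff p i \<in> adjoin K x" "poly p y = 0"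
    using L yL unfolding real_closure_of_def algebraic_over_def by blast
  define I where "I = {j. coeff p j \<noteq> 0}"
  define t where "t j = coeff p j * y ^ j" for j
  have IS: "I \<subseteq> {..degree p}" unfolding I_def using le_degree by auto
  have fin: "finite I" using IS finite_subset by blast
  have ne: "I \<noteq> {}" unfolding I_def using p(1) leading_coeff_0_iff by blast
  have nz: "\<forall>i\<in>I. t i \<noteq> 0" unfolding I_def t_def using y1 by auto
  have "sum t {..degree p} = sum t I"
    by (rule sum.mono_neutral_right[of "{..degree p}" I t]) (use IS in \<open>auto simp: I_def t_def\<close>)
  hence ps: "sum t I = 0" using p(3) unfolding poly_altdef t_def by simp
  have "\<forall>j\<in>I. \<exists>u a pp qq. 1/3 < u \<and> u < 3 \<and> a \<in> K \<and> a \<noteq> 0 \<and> coeff p j = u * (a * x ^ pp / x ^ qq)"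
    using elem[OF x] p(2) unfolding I_def by blast
  then obtain U A P Q where UA: "\<forall>j\<in>I. 1/3 < U j \<and> U j < 3 \<and> A j \<in> K \<and> A j \<noteq> 0 \<and>
      coeff p j = U j * (A j * x ^ P j / x ^ Q j)"
    by metis
  have cmp1: "infl \<bar>t i / t j\<bar> \<or> infl \<bar>t j / t i\<bar>" if "i \<in> I" "j \<in> I" "j < i" for i j
  proof -
    define c where "c = A i / A j"
    have ui: "1/3 < U i" "U i < 3" and uj: "1/3 < U j" "U j < 3"
      using UA that by auto
    have c: "c \<in> K" "c \<noteq> 0" unfolding c_def using UA that sfK by (auto simp: sf_divide)
    have dd: "i - j > 0" using that by simp
    define V where "V = \<bar>c\<bar> * x ^ (P i + Q j) / x ^ (Q i + P j) * y ^ (i - j)"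
    define u where "u = U i / U j"
    have u0: "0 < u" unfolding u_def using ui uj by simp
    have u1: "1 / u < 9" unfolding u_def using ui uj by (simp add: field_simps)
    have u2: "1 / (1 / u) < 9" unfolding u_def using ui uj by (simp add: field_simps)
    have yij: "y ^ i = y ^ (i - j) * y ^ j" using that by (simp add: power_add[symmetric])
    have "t i / t j = u * (c * x ^ (P i + Q j) / x ^ (Q i + P j) * y ^ (i - j))"
    proof -
      have ci: "coeff p i = U i * (A i * x ^ P i / x ^ Q i)" using UA that by blast
      have cj: "coeff p j = U j * (A j * x ^ P j / x ^ Q j)" using UA that by blast
      have nz': "A j \<noteq> 0" "U j \<noteq> 0" using UA that by auto
      show ?thesis unfolding t_def u_def c_def ci cj yij using x1 y1 nz'
        by (simp add: power_add field_simps)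
    qed
    hence e1: "\<bar>t i / t j\<bar> = u * V" unfolding V_def using u0 x1 y1
      by (simp add: abs_mult abs_divide)
    have e2: "\<bar>t j / t i\<bar> = (1 / u) * (1 / V)"
    proof -
      have "\<bar>t j / t i\<bar> = 1 / \<bar>t i / t j\<bar>" by (simp add: abs_divide)
      thus ?thesis unfolding e1 by simp
    qed
    from keyL[OF x y H c dd, of "P i + Q j" "Q i + P j"]
    have "infl V \<or> infl (1 / V)" unfolding V_def .
    thus ?thesis
    proof
      assume "infl V" thus ?thesis using infl_scale[OF _ u0 u1] e1 by simp
    next
      assume "infl (1 / V)"
      moreover have "0 < 1 / u" using u0 by simp
      ultimately have "infl ((1 / u) * (1 / V))" using infl_scale[OF _ _ u2] by blast
      thus ?thesis unfolding e2[symmetric] by blast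
    qed
  qed
  have cmp: "\<forall>i\<in>I. \<forall>j\<in>I. i \<noteq> j \<longrightarrow> infl \<bar>t i / t j\<bar> \<or> infl \<bar>t j / t i\<bar>"
  proof (intro ballI impI)
    fix i j assume "i \<in> I" "j \<in> I" "i \<noteq> j"
    thus "infl \<bar>t i / t j\<bar> \<or> infl \<bar>t j / t i\<bar>"
      using cmp1[of i j] cmp1[of j i] by (cases "j < i") auto
  qed
  show False using dominance_ne[OF fin ne nz cmp] ps by simp
qed

end

theorem lemma2p9:
  fixes K L Cm Cp :: "'a::linordered_field set" and x y :: 'a
  assumes "real_closed_subfield K"
    and "multiplicative_cut K Cm Cp"
    and "realizes_cut K Cm Cp x"
    and "real_closure_of L (adjoin K x)"
    and "y \<in> L"
    and "realizes_cut K Cm Cp y"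
  shows "\<exists>n::nat. n > 0 \<and> (\<exists>r. 0 < r \<and> r ^ n = x \<and> r < y) \<and> y < x ^ n"
proof (rule ccontr)
  assume neg: "\<not> ?thesis"
  interpret cutctx K Cm Cp using assms(1,2) by unfold_locales
  have x1: "1 \<le> x" "0 < x" using z_gt2[OF assms(3)] by auto
  have y1: "1 \<le> y" "0 < y" using z_gt2[OF assms(6)] by auto
  have rcL: "real_closed_subfield L" and xL: "x \<in> L"
    using assms(4) x_in_adjoin unfolding real_closure_of_def by blast+
  have H: "(\<forall>n. x ^ n \<le> y) \<or> (\<forall>n. y ^ n \<le> x)"
  proof (rule ccontr)
    assume "\<not> ?thesis"
    then obtain n1 n2 where n1: "y < x ^ n1" and n2: "x < y ^ n2" by (auto simp: not_le)
    define n where "n = Suc (max n1 n2)"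
    have n0: "n > 0" unfolding n_def by simp
    have "x ^ n1 \<le> x ^ n" using x1 unfolding n_def by (intro power_increasing) auto
    hence yn: "y < x ^ n" using n1 by simp
    have "y ^ n2 \<le> y ^ n" using y1 unfolding n_def by (intro power_increasing) auto
    hence xn: "x < y ^ n" using n2 by simp
    obtain r where r: "r \<in> L" "0 < r" "r ^ n = x" using rc_root[OF rcL xL x1(2) n0] by blast
    have "r < y"
    proof (rule ccontr)
      assume "\<not> r < y"
      hence "y ^ n \<le> r ^ n" using y1 by (intro power_mono) auto
      thus False using xn r by simp
    qed
    thus False using neg n0 r yn by blast
  qed
  show False using main_loc[OF assms(3,6,4,5) H] .
qed

end
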